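(* Let $A$ be a finite set. The action of $\Sigma_A$ on $\vec P(Y^A)_{\mathbf0}^{\mathbf1}$ is free.
   Context: A precubical set ($\square$-set) $K$ is a sequence of pairwise disjoint sets $(K[n])_{n\ge0}$ with face maps $d^\varepsilon_i:K[n]\to K[n-1]$ ($1\le i\le n$, $\varepsilon\in\{0,1\}$) satisfying $d^\varepsilon_i d^\eta_j=d^\eta_{j-1}d^\varepsilon_i$ for $i<j$; bi-pointed $\square$-sets have chosen vertices $\mathbf0,\mathbf1\in K[0]$. Geometric realization: $|K|=\coprod_n K[n]\times[0,1]^n/\sim$ with $(d^\varepsilon_i c,\mathbf x)\sim(c,\delta^\varepsilon_i\mathbf x)$, $\delta^\varepsilon_i$ inserting $\varepsilon$ as $i$-th coordinate; $[c;\mathbf x]$ is the class. A path $\alpha:[0,1]\to|K|$ is a d-path if there are $0=t_0<\dots<t_m=1$, $c_k\in K[n_k]$ and continuous $\beta_k:[t_{k-1},t_k]\to[0,1]^{n_k}$ with non-decreasing coordinates such that $\alpha(t)=[c_k;\beta_k(t)]$ on $[t_{k-1},t_k]$. $\vec P(K)_{\mathbf0}^{\mathbf1}$ is the space of d-paths from $\mathbf0$ to $\mathbf1$. $Y^A$ is the bi-pointed $\square$-set where $Y^A[k]$ is the set of pairs $(c,<)$ with $c:A\to\{0,*,1\}$, $|c^{-1}( * )|=k$, and $<$ a strict total order on $c^{-1}( * )$; if $c^{-1}( * )=\{a_1<\dots<a_k\}$ then $d^\varepsilon_i(c,<)=(c',<')$ where $c'(a_i)=\varepsilon$, $c'=c$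 elsewhere, and $<'$ is the restriction of $<$ to $c^{-1}( * )\setminus\{a_i\}$; $\mathbf0=(\text{const}_0,\emptyset)$, $\mathbf1=(\text{const}_1,\emptyset)$. $\Sigma_A$ acts on $Y^A$ from the right by $(c,<)\sigma=(c\circ\sigma,<\sigma)$ with $a\,(<\sigma)\,b$ iff $\sigma(a)<\sigma(b)$, inducing an action $(\alpha\sigma)(t)=\alpha(t)\sigma$ on $\vec P(Y^A)_{\mathbf0}^{\mathbf1}$, where $[c;\mathbf x]\sigma=[c\sigma;\mathbf x]$. *)

theory Defs
  imports "HOL-Analysis.Analysis" "HOL-Combinatorics.Permutations"
begin

text \<open>A precubical set is given by a carrier of cells K, a dimension function dm
  (c is in K[dm c]) and face maps face i e c (for 1 <= i <= dm c); the boolean e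
  encodes epsilon (False = 0, True = 1).\<close>

definition eps_real :: "bool \<Rightarrow> real" where
  "eps_real e = (if e then 1 else 0)"

text \<open>coface delta^e_i : inserts e as i-th coordinate (i is 1-based)\<close>
definition ins_at :: "nat \<Rightarrow> real \<Rightarrow> real list \<Rightarrow> real list" where
  "ins_at i v x = take (i - 1) x @ v # drop (i - 1) x"

definition cube_pts :: "'c set \<Rightarrow> ('c \<Rightarrow> nat) \<Rightarrow> ('c \<times> real list) set" where
  "cube_pts K dm = {(c, x). c \<in> K \<and> length x = dm c \<and> (\<forall>v\<in>set x. 0 \<le> v \<and> v \<le> 1)}"

definition glue_step :: "'c set \<Rightarrow> ('c \<Rightarrow> nat) \<Rightarrow> (nat \<Rightarrow> bool \<Rightarrow> 'c \<Rightarrow> 'c)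
    \<Rightarrow> 'c \<times> real list \<Rightarrow> 'c \<times> real list \<Rightarrow> bool" where
  "glue_step K dm face p q \<longleftrightarrow>
     (\<exists>c x i e. 1 \<le> i \<and> i \<le> dm c \<and> q = (c, ins_at i (eps_real e) x)
        \<and> p = (face i e c, x) \<and> q \<in> cube_pts K dm \<and> p \<in> cube_pts K dm)"

definition real_cls :: "'c set \<Rightarrow> ('c \<Rightarrow> nat) \<Rightarrow> (nat \<Rightarrow> bool \<Rightarrow> 'c \<Rightarrow> 'c)
    \<Rightarrow> 'c \<times> real list \<Rightarrow> ('c \<times> real list) set" where
  "real_cls K dm face p = {q. equivclp (glue_step K dm face) p q}"

definition realization :: "'c set \<Rightarrow> ('c \<Rightarrow> nat) \<Rightarrow> (nat \<Rightarrow> bool \<Rightarrow> 'c \<Rightarrow> 'c)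
    \<Rightarrow> ('c \<times> real list) set set" where
  "realization K dm face = real_cls K dm face ` cube_pts K dm"

definition is_dpath :: "'c set \<Rightarrow> ('c \<Rightarrow> nat) \<Rightarrow> (nat \<Rightarrow> bool \<Rightarrow> 'c \<Rightarrow> 'c)
    \<Rightarrow> (real \<Rightarrow> ('c \<times> real list) set) \<Rightarrow> bool" where
  "is_dpath K dm face \<alpha> \<longleftrightarrow>
     (\<exists>(m::nat) (t::nat \<Rightarrow> real) (c::nat \<Rightarrow> 'c) (\<beta>::nat \<Rightarrow> real \<Rightarrow> real list).
        m \<ge> 1 \<and> t 0 = 0 \<and> t m = 1 \<and> (\<forall>k<m. t k < t (Suc k)) \<and>
        (\<forall>k\<in>{1..m}.
           c k \<in> K \<and>
           (\<forall>s\<in>{t (k - 1)..t k}. (c k, \<beta> k s) \<in> cube_pts K dm) \<and>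
           (\<forall>j < dm (c k). continuous_on {t (k - 1)..t k} (\<lambda>s. \<beta> k s ! j)
                           \<and> mono_on {t (k - 1)..t k} (\<lambda>s. \<beta> k s ! j)) \<and>
           (\<forall>s\<in>{t (k - 1)..t k}. \<alpha> s = real_cls K dm face (c k, \<beta> k s))))"

text \<open>the space of d-paths from v0 to v1 (as functions on [0,1]; values outside
  [0,1] are irrelevant)\<close>
definition dpaths :: "'c set \<Rightarrow> ('c \<Rightarrow> nat) \<Rightarrow> (nat \<Rightarrow> bool \<Rightarrow> 'c \<Rightarrow> 'c) \<Rightarrow> 'c \<Rightarrow> 'c
    \<Rightarrow> (real \<Rightarrow> ('c \<times> real list) set) set" where
  "dpaths K dm face v0 v1 =
     {\<alpha>. is_dpath K dm face \<alpha> \<and> \<alpha> 0 = real_cls K dm face (v0, [])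
          \<and> \<alpha> 1 = real_cls K dm face (v1, [])}"

datatype cv = Zero | Star | One

type_synonym 'a ycell = "('a \<Rightarrow> cv) \<times> ('a \<times> 'a) set"

definition stars :: "('a \<Rightarrow> cv) \<Rightarrow> 'a set" where
  "stars c = {a. c a = Star}"

text \<open>functions A -> {0,*,1} are represented by functions equal to Zero outside A\<close>
definition Y_cells :: "'a set \<Rightarrow> 'a ycell set" where
  "Y_cells A = {(c, r). (\<forall>a. a \<notin> A \<longrightarrow> c a = Zero) \<and> r \<subseteq> stars c \<times> stars c
                      \<and> strict_linear_order_on (stars c) r}"

definition Y_dim :: "'a ycell \<Rightarrow> nat" where
  "Y_dim cr = card (stars (fst cr))"

text \<open>the i-th element a_i of c^{-1}(*) w.r.t. the order (1-based)\<close>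
definition ith_star :: "nat \<Rightarrow> 'a ycell \<Rightarrow> 'a" where
  "ith_star i cr = (THE a. a \<in> stars (fst cr) \<and> card {b \<in> stars (fst cr). (b, a) \<in> snd cr} = i - 1)"

definition Y_face :: "nat \<Rightarrow> bool \<Rightarrow> 'a ycell \<Rightarrow> 'a ycell" where
  "Y_face i e cr =
     (let a = ith_star i cr; c' = (fst cr)(a := (if e then One else Zero))
      in (c', snd cr \<inter> (stars c' \<times> stars c')))"

definition Y_zero :: "'a ycell" where "Y_zero = (\<lambda>_. Zero, {})"
definition Y_one :: "'a set \<Rightarrow> 'a ycell" where
  "Y_one A = ((\<lambda>a. if a \<in> A then One else Zero), {})"

definition cell_act :: "'a ycell \<Rightarrow> ('a \<Rightarrow> 'a) \<Rightarrow> 'a ycell" where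
  "cell_act cr \<sigma> = (fst cr \<circ> \<sigma>, {(a, b). (\<sigma> a, \<sigma> b) \<in> snd cr})"

definition pt_act :: "('a ycell \<times> real list) set \<Rightarrow> ('a \<Rightarrow> 'a) \<Rightarrow> ('a ycell \<times> real list) set" where
  "pt_act P \<sigma> = (\<lambda>(cr, x). (cell_act cr \<sigma>, x)) ` P"

definition path_act :: "(real \<Rightarrow> ('a ycell \<times> real list) set) \<Rightarrow> ('a \<Rightarrow> 'a)
    \<Rightarrow> (real \<Rightarrow> ('a ycell \<times> real list) set)" where
  "path_act \<alpha> \<sigma> = (\<lambda>t. pt_act (\<alpha> t) \<sigma>)"

definition Y_dpaths :: "'a set \<Rightarrow> (real \<Rightarrow> ('a ycell \<times> real list) set) set" where
  "Y_dpaths A = dpaths (Y_cells A) Y_dim Y_face Y_zero (Y_one A)"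

end

theory Submission
  imports Defs
begin

lemma equivclp_inv:
  assumes "equivclp g p q" "\<And>p q. g p q \<Longrightarrow> f p = f q"
  shows "f p = f q"
  using assms(1)
proof (induction rule: equivclp_induct)
  case base then show ?case by simp
next
  case (step y z) then show ?case using assms(2) by metis
qed

definition rk :: "'a set \<Rightarrow> ('a \<times> 'a) set \<Rightarrow> 'a \<Rightarrow> nat" where
  "rk S r a = card {b \<in> S. (b, a) \<in> r}"

lemma rk_less:
  assumes "finite S" "irrefl r" "trans r" "a \<in> S" "(a, b) \<in> r"
  shows "rk S r a < rk S r b"
proof -
  have sub: "{x \<in> S. (x, a) \<in> r} \<subseteq> {x \<in> S. (x, b) \<in> r}"
  proof
    fix x assume "x \<in> {x \<in> S. (x, a) \<in> r}"
    then have "x \<in> S" "(x, a) \<in> r" by auto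
    moreover have "(x, b) \<in> r" using transD[OF assms(3) \<open>(x, a) \<in> r\<close> assms(5)] .
    ultimately show "x \<in> {x \<in> S. (x, b) \<in> r}" by simp
  qed
  have "(a, a) \<notin> r" using assms(2) by (simp add: irrefl_def)
  then have "a \<notin> {x \<in> S. (x, a) \<in> r}" "a \<in> {x \<in> S. (x, b) \<in> r}" using assms(4,5) by auto
  then have "{x \<in> S. (x, a) \<in> r} \<subset> {x \<in> S. (x, b) \<in> r}" using sub by blast
  moreover have "finite {x \<in> S. (x, b) \<in> r}" using assms(1) by simp
  ultimately show ?thesis unfolding rk_def by (simp add: psubset_card_mono)
qed

lemma rk_inj:
  assumes "finite S" "strict_linear_order_on S r" "a \<in> S" "b \<in> S" "rk S r a = rk S r b"
  shows "a = b"
proof (rule ccontr)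
  assume "a \<noteq> b"
  have i: "irrefl r" "trans r" "total_on S r" using assms(2) unfolding strict_linear_order_on_def by auto
  then have "(a, b) \<in> r \<or> (b, a) \<in> r" using assms(3,4) \<open>a \<noteq> b\<close> unfolding total_on_def by blast
  then show False
  proof
    assume ab: "(a, b) \<in> r" show False using rk_less[OF assms(1) i(1,2) assms(3) ab] assms(5) by simp
  next
    assume ba: "(b, a) \<in> r" show False using rk_less[OF assms(1) i(1,2) assms(4) ba] assms(5) by simp
  qed
qed

lemma rk_bound:
  assumes "finite S" "irrefl r" "a \<in> S"
  shows "rk S r a < card S"
proof -
  have "{x \<in> S. (x, a) \<in> r} \<subset> S" using assms by (auto simp: irrefl_def)
  then show ?thesis unfolding rk_def using assms(1) by (rule psubset_card_mono[rotated])
qed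

lemma rk_surj:
  assumes "finite S" "strict_linear_order_on S r" "j < card S"
  shows "\<exists>a\<in>S. rk S r a = j"
proof -
  have inj: "inj_on (rk S r) S"
  proof (rule inj_onI)
    fix x y assume "x \<in> S" "y \<in> S" "rk S r x = rk S r y"
    then show "x = y" by (rule rk_inj[OF assms(1,2)])
  qed
  have irr: "irrefl r" using assms(2) unfolding strict_linear_order_on_def by simp
  have sub: "rk S r ` S \<subseteq> {..<card S}" using rk_bound[OF assms(1) irr] by auto
  have "card (rk S r ` S) = card {..<card S}" using card_image[OF inj] by simp
  then have "rk S r ` S = {..<card S}" using card_subset_eq[OF _ sub] by simp
  then have "j \<in> rk S r ` S" using assms(3) by simp
  then obtain a where "a \<in> S" "j = rk S r a" by (rule imageE)
  then show ?thesis by blast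
qed

lemma ins_at_nth:
  assumes "1 \<le> i" "i - 1 \<le> length x" "j \<le> length x"
  shows "ins_at i v x ! j = (if j < i - 1 then x ! j else if j = i - 1 then v else x ! (j - 1))"
  using assms unfolding ins_at_def
  by (auto simp: nth_append min_def nth_Cons' )

lemma ins_at_length: "i - 1 \<le> length x \<Longrightarrow> length (ins_at i v x) = Suc (length x)"
  unfolding ins_at_def by simp


definition rkc :: "'a ycell \<Rightarrow> 'a \<Rightarrow> nat" where
  "rkc cr a = rk (stars (fst cr)) (snd cr) a"

definition vl :: "'a ycell \<times> real list \<Rightarrow> 'a \<Rightarrow> real" where
  "vl p a = (case fst (fst p) a of Zero \<Rightarrow> 0 | One \<Rightarrow> 1 | Star \<Rightarrow> snd p ! rkc (fst p) a)"

definition Rl :: "'a ycell \<times> real list \<Rightarrow> ('a \<times> 'a) set" where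
  "Rl p = {(a, b). (a, b) \<in> snd (fst p) \<and> 0 < vl p a \<and> vl p a < 1 \<and> 0 < vl p b \<and> vl p b < 1}"

lemma stars_finite: "finite A \<Longrightarrow> (c, r) \<in> Y_cells A \<Longrightarrow> finite (stars c)"
proof -
  assume "finite A" "(c, r) \<in> Y_cells A"
  then have "stars c \<subseteq> A" unfolding Y_cells_def stars_def by force
  then show ?thesis using \<open>finite A\<close> by (rule finite_subset)
qed

lemma glue_inv:
  assumes fin: "finite A" and g: "glue_step (Y_cells A) Y_dim Y_face p q"
  shows "vl p = vl q \<and> Rl p = Rl q"
proof -
  obtain cr x i e where i: "1 \<le> i" "i \<le> Y_dim cr" and q: "q = (cr, ins_at i (eps_real e) x)"
    and p: "p = (Y_face i e cr, x)" and qc: "q \<in> cube_pts (Y_cells A) Y_dim"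
    using g unfolding glue_step_def by blast
  obtain c r where cr: "cr = (c, r)" by (cases cr)
  define S where "S = stars c"
  have crK: "(c, r) \<in> Y_cells A" using qc q cr unfolding cube_pts_def by auto
  then have rS: "r \<subseteq> S \<times> S" and slo: "strict_linear_order_on S r"
    unfolding Y_cells_def S_def by auto
  have finS: "finite S" using stars_finite[OF fin crK] S_def by simp
  have lenq: "length (ins_at i (eps_real e) x) = card S"
    using qc q cr unfolding cube_pts_def Y_dim_def S_def by auto
  have lenx: "length x + 1 = card S" using lenq unfolding ins_at_def by simp
  have iS: "i \<le> card S" using i cr unfolding Y_dim_def S_def by simp
  have "i - 1 < card S" using iS i by linarith
  then obtain a0 where a0: "a0 \<in> S" "rk S r a0 = i - 1"
    using rk_surj[OF finS slo, of "i - 1"] by auto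
  have ith: "ith_star i cr = a0"
    unfolding ith_star_def cr
    apply (rule the_equality)
    using a0 rk_inj[OF finS slo] unfolding rk_def S_def by auto
  define c' where "c' = c(a0 := (if e then One else Zero))"
  have face: "Y_face i e (c, r) = (c', r \<inter> (stars c' \<times> stars c'))"
    using ith unfolding Y_face_def c'_def Let_def cr by simp
  have stc': "stars c' = S - {a0}" unfolding c'_def S_def stars_def by auto
  have irr: "irrefl r" and tr: "trans r" and tot: "total_on S r"
    using slo unfolding strict_linear_order_on_def by auto
  have fp: "fst (fst p) = c'" and sp: "snd (fst p) = r \<inter> (stars c' \<times> stars c')"
    and xp: "snd p = x" using p face cr by auto
  have fq: "fst (fst q) = c" and sq: "snd (fst q) = r" and xq: "snd q = ins_at i (eps_real e) x"
    using q cr by auto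
  have vp: "vl p b = (case c' b of Zero \<Rightarrow> 0 | One \<Rightarrow> 1 | Star \<Rightarrow>
      x ! card {b' \<in> stars c'. (b', b) \<in> r \<inter> (stars c' \<times> stars c')})" for b
    unfolding vl_def fp xp rkc_def rk_def sp by simp
  have vq: "vl q b = (case c b of Zero \<Rightarrow> 0 | One \<Rightarrow> 1 | Star \<Rightarrow>
      ins_at i (eps_real e) x ! rk S r b)" for b
    unfolding vl_def fq xq rkc_def sq S_def by simp
  have il: "i - 1 \<le> length x" using lenx iS by linarith
  have vqa0: "vl q a0 = eps_real e"
  proof -
    have "c a0 = Star" using a0(1) unfolding S_def stars_def by auto
    then show ?thesis unfolding vq using a0(2) ins_at_nth[OF i(1) il, of "i - 1"] il by simp
  qed
  have vleq: "vl p b = vl q b" for b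
  proof (cases "b = a0")
    case True
    have "vl p b = eps_real e" unfolding vp True c'_def by (simp add: eps_real_def)
    then show ?thesis using vqa0 True by simp
  next
    case False
    show ?thesis
    proof (cases "c b = Star")
      case False
      then have "c' b = c b" using \<open>b \<noteq> a0\<close> c'_def by simp
      then show ?thesis using False unfolding vp vq by (cases "c b") auto
    next
      case True
      then have bS: "b \<in> S" unfolding S_def stars_def by simp
      have cb': "c' b = Star" using True \<open>b \<noteq> a0\<close> c'_def by simp
      have set': "{b' \<in> stars c'. (b', b) \<in> r \<inter> (stars c' \<times> stars c')} = {b' \<in> S. (b', b) \<in> r} - {a0}"
        using stc' bS \<open>b \<noteq> a0\<close> by auto
      have rkb: "rk S r b < card S" using rk_bound[OF finS irr bS] .
      have "rk S r b \<noteq> i - 1" using a0 rk_inj[OF finS slo a0(1) bS] \<open>b \<noteq> a0\<close> by auto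
      then consider "rk S r b < i - 1" | "rk S r b > i - 1" by linarith
      then show ?thesis
      proof cases
        case 1
        have "(a0, b) \<notin> r"
        proof
          assume "(a0, b) \<in> r"
          then have "rk S r a0 < rk S r b" using rk_less[OF finS irr tr a0(1)] by blast
          then show False using 1 a0 by simp
        qed
        then have "card {b' \<in> stars c'. (b', b) \<in> r \<inter> (stars c' \<times> stars c')} = rk S r b"
        proof -
          have "{b' \<in> S. (b', b) \<in> r} - {a0} = {b' \<in> S. (b', b) \<in> r}" using \<open>(a0, b) \<notin> r\<close> by blast
          then show ?thesis using set' unfolding rk_def by simp
        qed
        then show ?thesis unfolding vp vq using cb' True 1 ins_at_nth[OF i(1) il, of "rk S r b"] rkb lenx
          by simp
      next
        case 2
        have "(a0, b) \<in> r"
        proof (rule ccontr)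
          assume "(a0, b) \<notin> r"
          then have "(b, a0) \<in> r" using tot bS a0(1) \<open>b \<noteq> a0\<close> unfolding total_on_def by blast
          then have "rk S r b < rk S r a0" using rk_less[OF finS irr tr bS] by blast
          then show False using 2 a0 by simp
        qed
        then have "card {b' \<in> stars c'. (b', b) \<in> r \<inter> (stars c' \<times> stars c')} = rk S r b - 1"
          using set' a0 finS unfolding rk_def by (simp add: card_Diff_singleton)
        then show ?thesis unfolding vp vq using cb' True 2 ins_at_nth[OF i(1) il, of "rk S r b"] rkb lenx
          by simp
      qed
    qed
  qed
  then have V: "vl p = vl q" by (rule ext)
  have "Rl p = Rl q"
  proof -
    have "Rl q \<subseteq> Rl p"
    proof
      fix z assume z: "z \<in> Rl q"
      then obtain u w where zz: "z = (u, w)" by (cases z)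
      then have "u \<noteq> a0" "w \<noteq> a0" using z vqa0 unfolding Rl_def by (auto simp: eps_real_def split: if_splits)
      then show "z \<in> Rl p" using z zz rS stc' unfolding Rl_def V sp sq by auto
    qed
    moreover have "Rl p \<subseteq> Rl q" unfolding Rl_def V sp sq by auto
    ultimately show ?thesis by blast
  qed
  with V show ?thesis by simp
qed


lemma cls_self: "p \<in> real_cls K dm face p"
  unfolding real_cls_def by simp

lemma cls_inv:
  assumes "finite A" "q \<in> real_cls (Y_cells A) Y_dim Y_face p"
  shows "vl p = vl q \<and> Rl p = Rl q"
proof -
  have e: "equivclp (glue_step (Y_cells A) Y_dim Y_face) p q" using assms(2) unfolding real_cls_def by simp
  have "(vl p, Rl p) = (vl q, Rl q)"
    by (rule equivclp_inv[OF e, of "\<lambda>p. (vl p, Rl p)"]) (use glue_inv[OF assms(1)] in auto)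
  then show ?thesis by simp
qed

lemma cls_eq:
  assumes "finite A" "real_cls (Y_cells A) Y_dim Y_face p = real_cls (Y_cells A) Y_dim Y_face q"
  shows "vl p = vl q"
proof -
  have "p \<in> real_cls (Y_cells A) Y_dim Y_face q" using cls_self[of p "Y_cells A" Y_dim Y_face] assms(2) by simp
  then show ?thesis using cls_inv[OF assms(1)] by metis
qed

lemma rkc_act:
  assumes "bij \<sigma>"
  shows "rkc (cell_act cr \<sigma>) a = rkc cr (\<sigma> a)"
proof -
  define X where "X = {b' \<in> stars (fst cr). (b', \<sigma> a) \<in> snd cr}"
  have e1: "{b \<in> stars (fst (cell_act cr \<sigma>)). (b, a) \<in> snd (cell_act cr \<sigma>)} = {b. \<sigma> b \<in> X}"
    unfolding X_def cell_act_def stars_def by auto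
  have e2: "\<sigma> ` {b. \<sigma> b \<in> X} = X"
  proof
    show "\<sigma> ` {b. \<sigma> b \<in> X} \<subseteq> X" by auto
    show "X \<subseteq> \<sigma> ` {b. \<sigma> b \<in> X}"
    proof
      fix y assume "y \<in> X"
      moreover have "y = \<sigma> (inv \<sigma> y)" using assms by (simp add: bij_is_surj surj_f_inv_f)
      ultimately show "y \<in> \<sigma> ` {b. \<sigma> b \<in> X}" by (metis (mono_tags, lifting) image_eqI mem_Collect_eq)
    qed
  qed
  have "inj_on \<sigma> {b. \<sigma> b \<in> X}" using bij_is_inj[OF assms] by (metis inj_on_subset subset_UNIV)
  then have "card {b. \<sigma> b \<in> X} = card X"
    using card_image[of \<sigma> "{b. \<sigma> b \<in> X}"] e2 by simp
  then show ?thesis unfolding rkc_def rk_def using e1 X_def by simp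
qed

lemma vl_act:
  assumes "bij \<sigma>"
  shows "vl (cell_act cr \<sigma>, x) a = vl (cr, x) (\<sigma> a)"
proof -
  have "fst (cell_act cr \<sigma>) = fst cr \<circ> \<sigma>" by (simp add: cell_act_def)
  then show ?thesis unfolding vl_def using rkc_act[OF assms, of cr a] by (cases "fst cr (\<sigma> a)") simp_all
qed

lemma Rl_act:
  assumes "bij \<sigma>"
  shows "Rl (cell_act cr \<sigma>, x) = {(a, b). (\<sigma> a, \<sigma> b) \<in> Rl (cr, x)}"
  unfolding Rl_def vl_act[OF assms] by (simp add: cell_act_def)

lemma fix_lemma:
  assumes slo: "strict_linear_order_on I R" and fin: "finite I" and b: "bij \<sigma>"
    and inv1: "\<And>b. b \<in> I \<longleftrightarrow> \<sigma> b \<in> I"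
    and inv2: "\<And>a b. (a, b) \<in> R \<longleftrightarrow> (\<sigma> a, \<sigma> b) \<in> R"
    and aI: "a \<in> I"
  shows "\<sigma> a = a"
proof -
  define X where "X = {b \<in> I. (b, a) \<in> R}"
  have e: "{b \<in> I. (b, \<sigma> a) \<in> R} = \<sigma> ` X"
  proof
    show "\<sigma> ` X \<subseteq> {b \<in> I. (b, \<sigma> a) \<in> R}" unfolding X_def using inv1 inv2 by auto
    show "{b \<in> I. (b, \<sigma> a) \<in> R} \<subseteq> \<sigma> ` X"
    proof
      fix y assume y: "y \<in> {b \<in> I. (b, \<sigma> a) \<in> R}"
      have yy: "y = \<sigma> (inv \<sigma> y)" using b by (simp add: bij_is_surj surj_f_inv_f)
      then have "inv \<sigma> y \<in> X" using y inv1[of "inv \<sigma> y"] inv2[of "inv \<sigma> y" a] unfolding X_def by simp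
      then show "y \<in> \<sigma> ` X" using yy by (rule rev_image_eqI)
    qed
  qed
  have "inj_on \<sigma> X" using bij_is_inj[OF b] by (metis inj_on_subset subset_UNIV)
  then have "card (\<sigma> ` X) = card X" by (rule card_image)
  then have "rk I R (\<sigma> a) = rk I R a" unfolding rk_def using e X_def by simp
  then show ?thesis using rk_inj[OF fin slo] aI inv1 by blast
qed

lemma disc_ivt:
  fixes gL gR :: "nat \<Rightarrow> real"
  shows "1 \<le> m \<Longrightarrow> gL 1 \<le> y \<Longrightarrow> y \<le> gR m \<Longrightarrow> (\<forall>k. 1 \<le> k \<longrightarrow> k < m \<longrightarrow> gR k = gL (Suc k))
    \<Longrightarrow> \<exists>k. 1 \<le> k \<and> k \<le> m \<and> gL k \<le> y \<and> y \<le> gR k"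
proof (induction m)
  case 0 then show ?case by simp
next
  case (Suc m)
  show ?case
  proof (cases "m = 0")
    case True then show ?thesis using Suc.prems by auto
  next
    case False
    show ?thesis
    proof (cases "y \<le> gR m")
      case True
      then obtain k where "1 \<le> k \<and> k \<le> m \<and> gL k \<le> y \<and> y \<le> gR k"
        using Suc.IH Suc.prems False by auto
      then show ?thesis by (metis le_SucI)
    next
      case f: False
      have "gR m = gL (Suc m)" using Suc.prems(4) False by auto
      then show ?thesis using f Suc.prems(3) by (intro exI[of _ "Suc m"]) auto
    qed
  qed
qed

lemma t_mono:
  fixes t :: "nat \<Rightarrow> real"
  assumes "\<forall>k<m. t k < t (Suc k)"
  shows "j \<le> j' \<Longrightarrow> j' \<le> m \<Longrightarrow> t j \<le> t j'"
proof (induction j')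
  case 0 then show ?case by simp
next
  case (Suc j')
  show ?case
  proof (cases "j = Suc j'")
    case True then show ?thesis by simp
  next
    case False
    then have "t j \<le> t j'" using Suc by simp
    moreover have "t j' < t (Suc j')" using assms Suc.prems by simp
    ultimately show ?thesis by simp
  qed
qed


theorem proposition3p2:
  fixes A :: "'a set"
  assumes "finite A"
  shows "\<forall>\<alpha>\<in>Y_dpaths A. \<forall>\<sigma>. \<sigma> permutes A \<longrightarrow>
           (\<forall>t\<in>{0..1}. path_act \<alpha> \<sigma> t = \<alpha> t) \<longrightarrow> \<sigma> = id"
proof (intro ballI allI impI)
  fix \<alpha> \<sigma>
  assume \<alpha>Y: "\<alpha> \<in> Y_dpaths A" and perm: "\<sigma> permutes A"
    and fx: "\<forall>t\<in>{0..1}. path_act \<alpha> \<sigma> t = \<alpha> t"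
  let ?RC = "real_cls (Y_cells A) Y_dim Y_face"
  have bs: "bij \<sigma>" using perm by (rule permutes_bij)
  have dp: "is_dpath (Y_cells A) Y_dim Y_face \<alpha>" and a0: "\<alpha> 0 = ?RC (Y_zero, [])"
    and a1: "\<alpha> 1 = ?RC (Y_one A, [])"
    using \<alpha>Y unfolding Y_dpaths_def dpaths_def by auto
  obtain m t c \<beta> where m: "m \<ge> 1" and t0: "t 0 = 0" and tm: "t m = 1"
    and tinc: "\<forall>k<m. t k < t (Suc k)"
    and seg: "\<forall>k\<in>{1..m}. c k \<in> Y_cells A \<and>
           (\<forall>s\<in>{t (k - 1)..t k}. (c k, \<beta> k s) \<in> cube_pts (Y_cells A) Y_dim) \<and>
           (\<forall>j < Y_dim (c k). continuous_on {t (k - 1)..t k} (\<lambda>s. \<beta> k s ! j)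
                           \<and> mono_on {t (k - 1)..t k} (\<lambda>s. \<beta> k s ! j)) \<and>
           (\<forall>s\<in>{t (k - 1)..t k}. \<alpha> s = ?RC (c k, \<beta> k s))"
    using dp unfolding is_dpath_def by blast
  have segA: "\<alpha> s = ?RC (c k, \<beta> k s)" if "1 \<le> k" "k \<le> m" "t (k - 1) \<le> s" "s \<le> t k" for k s
    using seg that by auto
  show "\<sigma> = id"
  proof
    fix a show "\<sigma> a = id a"
    proof (cases "a \<in> A")
      case False then show ?thesis using permutes_not_in[OF perm] by simp
    next
      case True
      define gL where "gL k = vl (c k, \<beta> k (t (k - 1))) a" for k
      define gR where "gR k = vl (c k, \<beta> k (t k)) a" for k
      have tle: "t (k - 1) \<le> t k" if "k \<le> m" for k using t_mono[OF tinc, of "k - 1" k] that by simp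
      have t01: "0 \<le> t j \<and> t j \<le> 1" if "j \<le> m" for j
        using t_mono[OF tinc, of 0 j] t_mono[OF tinc, of j m] that t0 tm by simp
      have g1: "gL 1 = 0"
      proof -
        have "\<alpha> 0 = ?RC (c 1, \<beta> 1 (t 0))" using segA[of 1 "t 0"] m tle[of 1] t0 by simp
        then have "vl (Y_zero, []) = vl (c 1, \<beta> 1 (t 0))" using cls_eq[OF assms] a0 by metis
        moreover have "vl (Y_zero, []) a = 0" by (simp add: vl_def Y_zero_def)
        ultimately show ?thesis unfolding gL_def by simp
      qed
      have gm: "gR m = 1"
      proof -
        have "\<alpha> 1 = ?RC (c m, \<beta> m (t m))" using segA[of m "t m"] m tle[of m] tm by simp
        then have "vl (Y_one A, []) = vl (c m, \<beta> m (t m))" using cls_eq[OF assms] a1 by metis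
        moreover have "vl (Y_one A, []) a = 1" using True by (simp add: vl_def Y_one_def)
        ultimately show ?thesis unfolding gR_def by simp
      qed
      have conn: "\<forall>k. 1 \<le> k \<longrightarrow> k < m \<longrightarrow> gR k = gL (Suc k)"
      proof (intro allI impI)
        fix k assume k: "1 \<le> k" "k < m"
        have "\<alpha> (t k) = ?RC (c k, \<beta> k (t k))" using segA[of k "t k"] k tle[of k] by simp
        moreover have "\<alpha> (t k) = ?RC (c (Suc k), \<beta> (Suc k) (t k))"
          using segA[of "Suc k" "t k"] k tle[of "Suc k"] by simp
        ultimately have "vl (c k, \<beta> k (t k)) = vl (c (Suc k), \<beta> (Suc k) (t k))"
          using cls_eq[OF assms] by metis
        then show "gR k = gL (Suc k)" unfolding gL_def gR_def by simp
      qed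
      obtain k where k: "1 \<le> k" "k \<le> m" "gL k \<le> 1/2" "1/2 \<le> gR k"
        using disc_ivt[OF m, of gL "1/2" gR] g1 gm conn by auto
      have ckY: "c k \<in> Y_cells A"
        and contk: "\<And>j. j < Y_dim (c k) \<Longrightarrow> continuous_on {t (k - 1)..t k} (\<lambda>s. \<beta> k s ! j)"
        using seg k by auto
      obtain cc rr where ck: "c k = (cc, rr)" by (cases "c k")
      have ccY: "(cc, rr) \<in> Y_cells A" using ckY ck by simp
      then have rS: "rr \<subseteq> stars cc \<times> stars cc" and slo0: "strict_linear_order_on (stars cc) rr"
        unfolding Y_cells_def by auto
      have finst: "finite (stars cc)" using stars_finite[OF assms ccY] .
      have irr0: "irrefl rr" and tr0: "trans rr" and tot0: "total_on (stars cc) rr"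
        using slo0 unfolding strict_linear_order_on_def by auto
      have cont: "continuous_on {t (k - 1)..t k} (\<lambda>s. vl (c k, \<beta> k s) a)"
      proof (cases "cc a")
        case Zero
        then have e: "(\<lambda>s. vl (c k, \<beta> k s) a) = (\<lambda>s. 0)" by (simp add: vl_def ck)
        show ?thesis unfolding e by (rule continuous_on_const)
      next
        case One
        then have e: "(\<lambda>s. vl (c k, \<beta> k s) a) = (\<lambda>s. 1)" by (simp add: vl_def ck)
        show ?thesis unfolding e by (rule continuous_on_const)
      next
        case Star
        then have e: "(\<lambda>s. vl (c k, \<beta> k s) a) = (\<lambda>s. \<beta> k s ! rkc (c k) a)" by (simp add: vl_def ck)
        have "rkc (c k) a < Y_dim (c k)"
          using rk_bound[OF finst irr0, of a] Star unfolding rkc_def Y_dim_def ck stars_def by simp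
        then show ?thesis unfolding e by (rule contk)
      qed
      obtain s where s: "t (k - 1) \<le> s" "s \<le> t k" "vl (c k, \<beta> k s) a = 1/2"
        using IVT'[of "\<lambda>s. vl (c k, \<beta> k s) a" "t (k - 1)" "1/2" "t k"] k cont tle[of k]
        unfolding gL_def gR_def by auto
      define p0 where "p0 = (c k, \<beta> k s)"
      have as: "\<alpha> s = ?RC p0" using segA[of k s] s k unfolding p0_def by simp
      have "k - 1 \<le> m" using k by simp
      then have s01: "s \<in> {0..1}" using t01[of "k - 1"] t01[of k] s k by auto
      have "pt_act (\<alpha> s) \<sigma> = \<alpha> s" using fx s01 unfolding path_act_def by auto
      moreover have "(cell_act (c k) \<sigma>, \<beta> k s) \<in> pt_act (?RC p0) \<sigma>"
        unfolding pt_act_def by (rule rev_image_eqI[OF cls_self]) (simp add: p0_def)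
      ultimately have "(cell_act (c k) \<sigma>, \<beta> k s) \<in> ?RC p0" using as by simp
      then have inv: "vl p0 = vl (cell_act (c k) \<sigma>, \<beta> k s) \<and> Rl p0 = Rl (cell_act (c k) \<sigma>, \<beta> k s)"
        using cls_inv[OF assms] by blast
      have V: "vl p0 (\<sigma> b) = vl p0 b" for b
        using inv vl_act[OF bs, of "c k" "\<beta> k s" b] unfolding p0_def by simp
      have R\<sigma>: "(u, w) \<in> Rl p0 \<longleftrightarrow> (\<sigma> u, \<sigma> w) \<in> Rl p0" for u w
        using inv Rl_act[OF bs, of "c k" "\<beta> k s"] unfolding p0_def by auto
      define I where "I = {b. 0 < vl p0 b \<and> vl p0 b < 1}"
      have IS: "I \<subseteq> stars cc"
      proof
        fix b assume "b \<in> I"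
        then show "b \<in> stars cc" unfolding I_def p0_def vl_def ck stars_def
          by (cases "cc b") auto
      qed
      have finI: "finite I" using finite_subset[OF IS finst] .
      have Rl0: "Rl p0 = {(u, w). (u, w) \<in> rr \<and> u \<in> I \<and> w \<in> I}"
        unfolding Rl_def I_def p0_def ck by auto
      have slo: "strict_linear_order_on I (Rl p0)"
        unfolding strict_linear_order_on_def
      proof (intro conjI)
        show "trans (Rl p0)" unfolding Rl0 using tr0 by (auto intro: transI dest: transD)
        show "irrefl (Rl p0)" unfolding Rl0 using irr0 by (auto simp: irrefl_def)
        show "total_on I (Rl p0)" unfolding Rl0 using tot0 IS unfolding total_on_def by blast
      qed
      have aI: "a \<in> I" using s unfolding I_def p0_def by simp
      have "\<sigma> a = a"
        by (rule fix_lemma[OF slo finI bs _ R\<sigma> aI]) (simp add: I_def V)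
      then show ?thesis by simp
    qed
  qed
qed

end
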